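(* In the semi-classical setting, with $\Theta_n,\Omega_n$ as in the context, for every $n\ge 1$: $$\Omega_{n+1}(z) = (z-b_n)\Theta_n(z) - \Omega_n(z),$$ $$(z-b_n)\big(\Omega_{n+1}(z)-\Omega_n(z)\big) = W(z) + a_{n+1}^2\Theta_{n+1}(z) - a_n^2\Theta_{n-1}(z),$$ $$\Omega_n(z)^2 - a_n^2\Theta_n(z)\Theta_{n-1}(z) = V(z)^2 + W(z)\sum_{i=0}^{n-1}\Theta_i(z).$$
   Context: Let $(\mu_k)_{k\ge 0}$ be complex numbers such that all Hankel determinants $\det(\mu_{i+j})_{0\le i,j\le n}$ are nonzero; $\mathcal L(x^k)=\mu_k$; $p_n(z)=\gamma_n z^n+\cdots$ ($\gamma_n\ne0$) orthonormal: $\mathcal L(p_np_m)=\delta_{n,m}$; recurrence $a_{n+1}p_{n+1}(z)=(z-b_n)p_n(z)-a_np_{n-1}(z)$, $p_{-1}=0$, $a_n=\gamma_{n-1}/\gamma_n$. $f(z)=\sum_{k\ge0}\mu_k z^{-k-1}$ (formal series); $p^{(1)}_{n-1}$ is the polynomial part of $fp_n$ and $\varepsilon_n=fp_n-p^{(1)}_{n-1}$. Semi-classical: polynomials $W\not\equiv0,V,U$ with $Wf'=2Vf+U$. For $n\ge0$, $\Theta_n = W(\varepsilon_n p_n' - \varepsilon_n' p_n) + 2V\varepsilon_n p_n$, and for $n\ge1$, $\Omega_n = a_n W(\varepsilon_{n-1}p_n' - \varepsilon_n' p_{n-1}) + a_n V(\varepsilon_{n-1}p_n + \varepsilon_n p_{n-1})$;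 these are polynomials in $z$. *)

theory Defs
  imports "HOL-Computational_Algebra.Computational_Algebra" "Jordan_Normal_Form.Determinant"
begin

definition hankel :: "(nat \<Rightarrow> complex) \<Rightarrow> nat \<Rightarrow> complex mat" where
  "hankel mu n = mat (n+1) (n+1) (\<lambda>(i,j). mu (i+j))"

definition momL :: "(nat \<Rightarrow> complex) \<Rightarrow> complex poly \<Rightarrow> complex" where
  "momL mu q = (\<Sum>k\<le>degree q. coeff q k * mu k)"

(* Formal series in z with finitely many positive powers of z are represented as
   formal Laurent series in the variable w = 1/z: z^j corresponds to w^(-j). *)
definition zser :: "complex poly \<Rightarrow> complex fls" where
  "zser q = (\<Sum>j\<le>degree q. fls_const (coeff q j) * fls_X_intpow (- int j))"

(* derivative with respect to z: d/dz = - w^2 d/dw *)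
definition zderiv :: "complex fls \<Rightarrow> complex fls" where
  "zderiv F = - (fls_X ^ 2 * fls_deriv F)"

(* f(z) = sum_k mu_k z^(-k-1) = sum_k mu_k w^(k+1) *)
definition stieltjes :: "(nat \<Rightarrow> complex) \<Rightarrow> complex fls" where
  "stieltjes mu = fps_to_fls (Abs_fps (\<lambda>k. if k = 0 then 0 else mu (k - 1)))"

(* polynomial part (in z) of a series: terms z^j with j >= 0, i.e. w-exponents <= 0 *)
definition poly_part :: "complex fls \<Rightarrow> complex fls" where
  "poly_part F = (\<Sum>j\<in>{fls_subdegree F..0}. fls_const (fls_nth F j) * fls_X_intpow j)"

(* epsilon_n = f p_n - p^(1)_(n-1) *)
definition eps :: "(nat \<Rightarrow> complex) \<Rightarrow> (nat \<Rightarrow> complex poly) \<Rightarrow> nat \<Rightarrow> complex fls" where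
  "eps mu p n = stieltjes mu * zser (p n) - poly_part (stieltjes mu * zser (p n))"

definition rec_a :: "(nat \<Rightarrow> complex poly) \<Rightarrow> nat \<Rightarrow> complex" where
  "rec_a p n = lead_coeff (p (n - 1)) / lead_coeff (p n)"

definition Theta :: "(nat \<Rightarrow> complex) \<Rightarrow> (nat \<Rightarrow> complex poly) \<Rightarrow> complex poly \<Rightarrow> complex poly
    \<Rightarrow> nat \<Rightarrow> complex fls" where
  "Theta mu p W V n =
     zser W * (eps mu p n * zser (pderiv (p n)) - zderiv (eps mu p n) * zser (p n))
     + 2 * zser V * eps mu p n * zser (p n)"

definition Omega :: "(nat \<Rightarrow> complex) \<Rightarrow> (nat \<Rightarrow> complex poly) \<Rightarrow> complex poly \<Rightarrow> complex poly
    \<Rightarrow> nat \<Rightarrow> complex fls" where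
  "Omega mu p W V n =
     fls_const (rec_a p n) * zser W *
        (eps mu p (n - 1) * zser (pderiv (p n)) - zderiv (eps mu p n) * zser (p (n - 1)))
     + fls_const (rec_a p n) * zser V *
        (eps mu p (n - 1) * zser (p n) + eps mu p n * zser (p (n - 1)))"

end

theory Submission
  imports Defs
begin


lemma zser_nth: "fls_nth (zser q) k = (if k \<le> 0 then coeff q (nat (-k)) else 0)"
proof -
  have "fls_nth (zser q) k = (\<Sum>j\<le>degree q. coeff q j * (if k = - int j then 1 else 0))"
    unfolding zser_def fls_nth_sum by (intro sum.cong) auto
  also have "\<dots> = (\<Sum>j\<in>{..degree q} \<inter> {j. k = - int j}. coeff q j)"
    by (subst sum.inter_restrict) (auto intro: sum.cong)
  also have "\<dots> = (if k \<le> 0 then coeff q (nat (-k)) else 0)"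
  proof (cases "k \<le> 0")
    case True
    show ?thesis
    proof (cases "nat (-k) \<le> degree q")
      case True2: True
      have "{..degree q} \<inter> {j. k = - int j} = {nat (-k)}" using True True2 by auto
      then show ?thesis using True by simp
    next
      case False
      have "{..degree q} \<inter> {j. k = - int j} = {}" using True False by auto
      then show ?thesis using True False by (simp add: coeff_eq_0)
    qed
  next
    case False
    have "{..degree q} \<inter> {j. k = - int j} = {}" using False by auto
    then show ?thesis using False by simp
  qed
  finally show ?thesis .
qed

lemma zser_0[simp]: "zser 0 = 0"
  by (rule fls_eqI) (simp add: zser_nth)

lemma zser_add: "zser (p + q) = zser p + zser q"
  by (rule fls_eqI) (simp add: zser_nth)

lemma zser_diff: "zser (p - q) = zser p - zser q"
  by (rule fls_eqI) (simp add: zser_nth)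

lemma zser_smult: "zser (Polynomial.smult c q) = fls_const c * zser q"
  by (rule fls_eqI) (simp add: zser_nth)

lemma zser_pCons: "zser (pCons c q) = fls_const c + fls_X_inv * zser q"
proof (rule fls_eqI)
  fix k :: int
  consider "k = 0" | "k < 0" | "k > 0" by linarith
  then show "fls_nth (zser (pCons c q)) k = fls_nth (fls_const c + fls_X_inv * zser q) k"
  proof cases
    case 2
    then have "nat (-k) = Suc (nat (-(k+1)))" by simp
    then show ?thesis using 2 by (simp add: zser_nth fls_X_inv_times_conv_shift)
  qed (auto simp: zser_nth fls_X_inv_times_conv_shift)
qed

lemma zser_mult: "zser (p * q) = zser p * zser q"
proof (induction p rule: pCons_induct)
  case 0 then show ?case by simp
next
  case (pCons c p)
  have "pCons c p * q = Polynomial.smult c q + pCons 0 (p * q)" by simp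
  then show ?case using pCons
    by (simp add: zser_add zser_smult zser_pCons algebra_simps)
qed

lemma zser_const: "zser [:c:] = fls_const c"
  by (simp add: zser_pCons)

lemma zser_lin: "zser [:- b, 1:] = fls_X_inv - fls_const b"
  by (simp add: zser_pCons)



lemma zderiv_add: "zderiv (F + G) = zderiv F + zderiv G"
  by (simp add: zderiv_def algebra_simps)
lemma zderiv_diff: "zderiv (F - G) = zderiv F - zderiv G"
  by (simp add: zderiv_def algebra_simps)
lemma zderiv_mult: "zderiv (F * G) = F * zderiv G + zderiv F * G"
  by (simp add: zderiv_def algebra_simps)
lemma zderiv_const[simp]: "zderiv (fls_const c) = 0"
  by (simp add: zderiv_def)
lemma zderiv_one[simp]: "zderiv 1 = 0"
  by (simp add: zderiv_def)
lemma zderiv_const_mult: "zderiv (fls_const c * F) = fls_const c * zderiv F"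
  by (simp add: zderiv_mult)
lemma X_X_inv: "(fls_X :: complex fls) * fls_X_inv = 1"
  by (simp add: fls_X_inv_times_conv_shift fls_X_conv_shift_1)
lemma zderiv_X_inv[simp]: "zderiv fls_X_inv = 1"
proof -
  have "zderiv fls_X_inv = (fls_X * fls_X_inv)^2"
    by (simp add: zderiv_def power2_eq_square algebra_simps)
  then show ?thesis by (simp add: X_X_inv)
qed

lemma zderiv_zser: "zderiv (zser q) = zser (pderiv q)"
proof (induction q rule: pCons_induct)
  case 0 then show ?case by (simp add: zderiv_def)
next
  case (pCons c p)
  then show ?case
    by (simp add: zser_pCons zderiv_add zderiv_mult pderiv_pCons zser_add)
qed

lemma poly_part_nth: "fls_nth (poly_part F) k = (if k \<le> 0 then fls_nth F k else 0)"
proof -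
  have "fls_nth (poly_part F) k = (\<Sum>j\<in>{fls_subdegree F..0}. if j = k then fls_nth F j else 0)"
    unfolding poly_part_def fls_nth_sum by (intro sum.cong) auto
  also have "\<dots> = (if k \<in> {fls_subdegree F..0} then fls_nth F k else 0)"
    by simp
  also have "\<dots> = (if k \<le> 0 then fls_nth F k else 0)"
    by auto
  finally show ?thesis .
qed

definition negp :: "complex fls \<Rightarrow> complex fls" where
  "negp F = F - poly_part F"

lemma negp_nth: "fls_nth (negp F) k = (if k \<le> 0 then 0 else fls_nth F k)"
  by (simp add: negp_def poly_part_nth)

lemma negp_add: "negp (F + G) = negp F + negp G"
  by (rule fls_eqI) (simp add: negp_nth)
lemma negp_diff: "negp (F - G) = negp F - negp G"
  by (rule fls_eqI) (simp add: negp_nth)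
lemma negp_const_mult: "negp (fls_const c * F) = fls_const c * negp F"
  by (rule fls_eqI) (simp add: negp_nth)
lemma negp_X_inv: "negp (fls_X_inv * F) = fls_X_inv * negp F - fls_const (fls_nth F 1)"
  by (rule fls_eqI) (simp add: negp_nth fls_X_inv_times_conv_shift)

lemma stieltjes_nth: "fls_nth (stieltjes mu) k = (if k \<le> 0 then 0 else mu (nat k - 1))"
  by (simp add: stieltjes_def)

lemma negp_stieltjes: "negp (stieltjes mu) = stieltjes mu"
  by (rule fls_eqI) (simp add: negp_nth stieltjes_nth)

lemma term_eq: "F * (fls_const c * fls_X_intpow (- int j)) = fls_const c * fls_shift (int j) (F::complex fls)"
proof -
  have 1: "F * fls_X_intpow (- int j) = fls_shift (- (- int j)) F"
    by (rule fls_X_intpow_times_conv_shift(2))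
  have "F * (fls_const c * fls_X_intpow (- int j)) = fls_const c * (F * fls_X_intpow (- int j))"
    by (rule mult.left_commute)
  then show ?thesis unfolding 1 by simp
qed

lemma residue: "fls_nth (stieltjes mu * zser q) 1 = momL mu q"
proof -
  have "stieltjes mu * zser q = (\<Sum>j\<le>degree q. fls_const (coeff q j) * fls_shift (int j) (stieltjes mu))"
    unfolding zser_def sum_distrib_left
    by (intro sum.cong refl) (rule term_eq)
  then show ?thesis
    unfolding momL_def by (simp add: fls_nth_sum stieltjes_nth nat_add_distrib)
qed

lemma eps_alt: "eps mu p n = negp (stieltjes mu * zser (p n))"
  by (simp add: eps_def negp_def)



lemma alg1:
  fixes a a1 u W V P Q R dP dQ dR e E G de dE dG :: "'a::comm_ring_1"
  assumes hR: "a1*R = u*Q - a*P" and hdR: "a1*dR = Q + u*dQ - a*dP"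
    and hG: "a1*G = u*E - a*e" and hdG: "a1*dG = E + u*dE - a*de"
    and hD: "a*(de*Q + e*dQ - dE*P - E*dP) = 0"
  shows "a1*W*(E*dR - dG*Q) + a1*V*(E*R + G*Q)
       = u*(W*(E*dQ - dE*Q) + 2*V*E*Q) - (a*W*(e*dQ - dE*P) + a*V*(e*Q + E*P))"
proof -
  have "a1*W*(E*dR - dG*Q) + a1*V*(E*R + G*Q) = W*(E*(a1*dR) - (a1*dG)*Q) + V*(E*(a1*R) + (a1*G)*Q)"
    by (simp add: algebra_simps)
  also have "\<dots> = W*(E*(Q + u*dQ - a*dP) - (E + u*dE - a*de)*Q) + V*(E*(u*Q - a*P) + (u*E - a*e)*Q)"
    by (simp only: hR hdR hG hdG)
  also have "\<dots> = u*(W*(E*dQ - dE*Q) + 2*V*E*Q) - (a*W*(e*dQ - dE*P) + a*V*(e*Q + E*P))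
       + W*(a*(de*Q + e*dQ - dE*P - E*dP))"
    by (simp add: algebra_simps)
  finally show ?thesis using hD by simp
qed

lemma alg2:
  fixes a a1 u W V P Q R dP dQ dR e E G de dE dG :: "'a::comm_ring_1"
  assumes hR: "a1*R = u*Q - a*P" and hdR: "a1*dR = Q + u*dQ - a*dP"
    and hG: "a1*G = u*E - a*e" and hdG: "a1*dG = E + u*dE - a*de"
    and hW: "a*(e*Q - E*P) = 1"
    and hD: "a*(de*Q + e*dQ - dE*P - E*dP) = 0"
  shows "u*((a1*W*(E*dR - dG*Q) + a1*V*(E*R + G*Q)) - (a*W*(e*dQ - dE*P) + a*V*(e*Q + E*P)))
       = W + a1^2*(W*(G*dR - dG*R) + 2*V*G*R) - a^2*(W*(e*dP - de*P) + 2*V*e*P)"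
proof -
  have "a1^2*(W*(G*dR - dG*R) + 2*V*G*R) = W*((a1*G)*(a1*dR) - (a1*dG)*(a1*R)) + 2*V*(a1*G)*(a1*R)"
    by (simp add: algebra_simps power2_eq_square)
  also have "\<dots> = W*((u*E - a*e)*(Q + u*dQ - a*dP) - (E + u*dE - a*de)*(u*Q - a*P)) + 2*V*(u*E - a*e)*(u*Q - a*P)"
    by (simp only: hR hdR hG hdG)
  finally have T: "a1^2*(W*(G*dR - dG*R) + 2*V*G*R) = W*((u*E - a*e)*(Q + u*dQ - a*dP) - (E + u*dE - a*de)*(u*Q - a*P)) + 2*V*(u*E - a*e)*(u*Q - a*P)" .
  have O: "a1*W*(E*dR - dG*Q) + a1*V*(E*R + G*Q)
       = u*(W*(E*dQ - dE*Q) + 2*V*E*Q) - (a*W*(e*dQ - dE*P) + a*V*(e*Q + E*P))"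
    by (rule alg1[OF hR hdR hG hdG hD])
  show ?thesis unfolding T O
  proof -
    have "u*(u*(W*(E*dQ - dE*Q) + 2*V*E*Q) - (a*W*(e*dQ - dE*P) + a*V*(e*Q + E*P)) - (a*W*(e*dQ - dE*P) + a*V*(e*Q + E*P)))
      = W + W*((u*E - a*e)*(Q + u*dQ - a*dP) - (E + u*dE - a*de)*(u*Q - a*P)) + 2*V*(u*E - a*e)*(u*Q - a*P)
        - a^2*(W*(e*dP - de*P) + 2*V*e*P) - W*(1 - a*(e*Q - E*P)) - u*W*(a*(de*Q + e*dQ - dE*P - E*dP))"
      by (simp add: algebra_simps power2_eq_square)
    then show "u*(u*(W*(E*dQ - dE*Q) + 2*V*E*Q) - (a*W*(e*dQ - dE*P) + a*V*(e*Q + E*P)) - (a*W*(e*dQ - dE*P) + a*V*(e*Q + E*P)))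
      = W + (W*((u*E - a*e)*(Q + u*dQ - a*dP) - (E + u*dE - a*de)*(u*Q - a*P)) + 2*V*(u*E - a*e)*(u*Q - a*P))
        - a^2*(W*(e*dP - de*P) + 2*V*e*P)"
      using hW hD by simp
  qed
qed

lemma alg3:
  fixes X X1 u T T1 Tm W A B :: "'a::comm_ring_1"
  assumes h1: "X1 = u*T - X" and h2: "u*(X1 - X) = W + B*T1 - A*Tm"
  shows "X1^2 - B*T1*T = X^2 - A*T*Tm + W*T"
proof -
  have s: "X1 + X = u*T" using h1 by simp
  have "X1^2 - X^2 = (X1 - X)*(X1 + X)"
    by (simp add: algebra_simps power2_eq_square)
  also have "\<dots> = (u*(X1 - X))*T" unfolding s by (simp add: algebra_simps)
  finally have "X1^2 - X^2 = (u*(X1 - X))*T" .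
  then show ?thesis unfolding h2 by (simp add: algebra_simps)
qed



lemma alg_base:
  fixes a1 u W V U c s f df P0 dP0 e0 de0 P1 dP1 E1 dE1 :: "'a::comm_ring_1"
  assumes hP0: "P0 = c" and hdP0: "dP0 = 0" and he0: "e0 = c*f" and hde0: "de0 = c*df"
    and hP1: "a1*P1 = u*P0" and hdP1: "a1*dP1 = P0"
    and hE1: "a1*E1 = u*e0 - s" and hdE1: "a1*dE1 = e0 + u*de0"
    and hsc: "s*c = 1" and hsemi: "W*df = 2*V*f + U"
  shows "(a1*W*(e0*dP1 - dE1*P0) + a1*V*(e0*P1 + E1*P0))^2
          - a1^2 * (W*(E1*dP1 - dE1*P1) + 2*V*E1*P1) * (W*(e0*dP0 - de0*P0) + 2*V*e0*P0)
        = V^2 + W * (W*(e0*dP0 - de0*P0) + 2*V*e0*P0)"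
proof -
  have "a1*W*(e0*dP1 - dE1*P0) + a1*V*(e0*P1 + E1*P0)
      = W*(e0*(a1*dP1) - (a1*dE1)*P0) + V*(e0*(a1*P1) + (a1*E1)*P0)"
    by (simp add: algebra_simps)
  also have "\<dots> = W*(c*f*c - (c*f + u*(c*df))*c) + V*(c*f*(u*c) + (u*(c*f) - s)*c)"
    by (simp only: hP1 hdP1 hE1 hdE1 he0 hde0 hP0)
  also have "\<dots> = - u*c^2*(W*df) + 2*u*c^2*V*f - (s*c)*V"
    by (simp add: algebra_simps power2_eq_square)
  also have "\<dots> = - u*c^2*U - V"
    unfolding hsc hsemi by (simp add: algebra_simps)
  finally have hO: "a1*W*(e0*dP1 - dE1*P0) + a1*V*(e0*P1 + E1*P0) = - u*c^2*U - V" .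
  have "a1^2 * (W*(E1*dP1 - dE1*P1) + 2*V*E1*P1)
      = W*((a1*E1)*(a1*dP1) - (a1*dE1)*(a1*P1)) + 2*V*(a1*E1)*(a1*P1)"
    by (simp add: algebra_simps power2_eq_square)
  also have "\<dots> = W*((u*(c*f) - s)*c - (c*f + u*(c*df))*(u*c)) + 2*V*(u*(c*f) - s)*(u*c)"
    by (simp only: hP1 hdP1 hE1 hdE1 he0 hde0 hP0)
  also have "\<dots> = - (s*c)*W - u^2*c^2*(W*df) + 2*u^2*c^2*V*f - 2*u*(s*c)*V"
    by (simp add: algebra_simps power2_eq_square)
  also have "\<dots> = - W - u^2*c^2*U - 2*u*V"
    unfolding hsc hsemi by (simp add: algebra_simps)
  finally have hT1: "a1^2 * (W*(E1*dP1 - dE1*P1) + 2*V*E1*P1) = - W - u^2*c^2*U - 2*u*V" .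
  have "W*(e0*dP0 - de0*P0) + 2*V*e0*P0 = - (c^2*(W*df)) + 2*c^2*V*f"
    unfolding hdP0 hde0 hP0 he0 by (simp add: algebra_simps power2_eq_square)
  also have "\<dots> = - (c^2*U)" unfolding hsemi by (simp add: algebra_simps)
  finally have hT0: "W*(e0*dP0 - de0*P0) + 2*V*e0*P0 = - (c^2*U)" .
  show ?thesis unfolding hO hT1 hT0
    by (simp add: algebra_simps power2_eq_square)
qed



lemma momL_smult: "momL mu (Polynomial.smult c q) = c * momL mu q"
  by (cases "c = 0") (simp_all add: momL_def sum_distrib_left algebra_simps)

lemma eps_rec:
  assumes h: "Polynomial.smult A R = [:- b, 1:] * Q - Polynomial.smult B S"
  shows "fls_const A * negp (stieltjes mu * zser R)
       = (fls_X_inv - fls_const b) * negp (stieltjes mu * zser Q)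
         - fls_const B * negp (stieltjes mu * zser S) - fls_const (momL mu Q)"
proof -
  have "fls_const A * zser R = (fls_X_inv - fls_const b) * zser Q - fls_const B * zser S"
    using arg_cong[OF h, of zser] by (simp only: zser_smult zser_diff zser_mult zser_lin)
  then have "stieltjes mu * (fls_const A * zser R) = stieltjes mu * ((fls_X_inv - fls_const b) * zser Q - fls_const B * zser S)"
    by simp
  then have "fls_const A * (stieltjes mu * zser R) = fls_X_inv * (stieltjes mu * zser Q)
      - fls_const b * (stieltjes mu * zser Q) - fls_const B * (stieltjes mu * zser S)"
    by (simp add: algebra_simps)
  then have "negp (fls_const A * (stieltjes mu * zser R)) = negp (fls_X_inv * (stieltjes mu * zser Q)
      - fls_const b * (stieltjes mu * zser Q) - fls_const B * (stieltjes mu * zser S))"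
    by simp
  then show ?thesis
    by (simp only: negp_diff negp_const_mult negp_X_inv residue) (simp add: algebra_simps)
qed

lemma deriv_rec:
  assumes h: "fls_const A * R = (fls_X_inv - fls_const b) * Q - fls_const B * S"
  shows "fls_const A * zderiv R = Q + (fls_X_inv - fls_const b) * zderiv Q - fls_const B * zderiv S"
proof -
  have "zderiv (fls_const A * R) = zderiv ((fls_X_inv - fls_const b) * Q - fls_const B * S)"
    using h by simp
  then have "fls_const A * zderiv R = (fls_X_inv - fls_const b) * zderiv Q + (1 - 0) * Q - fls_const B * zderiv S"
    by (simp only: zderiv_mult zderiv_diff zderiv_const_mult zderiv_X_inv zderiv_const) simp
  then show ?thesis by (simp add: algebra_simps)
qed



theorem mainTheorem3:
  fixes mu :: "nat \<Rightarrow> complex" and p :: "nat \<Rightarrow> complex poly" and b :: "nat \<Rightarrow> complex"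
    and W V U :: "complex poly" and n :: nat
  assumes hankel: "\<And>m. det (hankel mu m) \<noteq> 0"
    and deg: "\<And>m. degree (p m) = m"
    and orth: "\<And>m k. momL mu (p m * p k) = (if m = k then 1 else 0)"
    and rec0: "Polynomial.smult (rec_a p 1) (p 1) = [:- b 0, 1:] * p 0"
    and rec: "\<And>m. m \<ge> 1 \<Longrightarrow>
       Polynomial.smult (rec_a p (m + 1)) (p (m + 1)) = [:- b m, 1:] * p m - Polynomial.smult (rec_a p m) (p (m - 1))"
    and W_nz: "W \<noteq> 0"
    and semiclassical: "zser W * zderiv (stieltjes mu) = 2 * zser V * stieltjes mu + zser U"
    and n: "n \<ge> 1"
  shows "Omega mu p W V (n + 1) = zser [:- b n, 1:] * Theta mu p W V n - Omega mu p W V n \<and>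
         zser [:- b n, 1:] * (Omega mu p W V (n + 1) - Omega mu p W V n) =
           zser W + fls_const (rec_a p (n + 1) ^ 2) * Theta mu p W V (n + 1)
                  - fls_const (rec_a p n ^ 2) * Theta mu p W V (n - 1) \<and>
         Omega mu p W V n ^ 2 - fls_const (rec_a p n ^ 2) * Theta mu p W V n * Theta mu p W V (n - 1) =
           zser V ^ 2 + zser W * (\<Sum>i<n. Theta mu p W V i)"
proof -
  define f where "f = stieltjes mu"
  define Pz where "Pz m = zser (p m)" for m
  define dPz where "dPz m = zderiv (zser (p m))" for m
  define Ez where "Ez m = eps mu p m" for m
  define dEz where "dEz m = zderiv (eps mu p m)" for m
  define A where "A m = fls_const (rec_a p m)" for m
  define u where "u m = fls_X_inv - fls_const (b m)" for m
  define c where "c = coeff (p 0) 0"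
  define s where "s = momL mu (p 0)"
  have p0: "p 0 = [:c:]" using degree_0_id[OF deg[of 0]] c_def by simp
  have c0: "c \<noteq> 0" using orth[of 0 0] p0 by (auto simp: momL_def)
  have Lp: "c * momL mu (p m) = (if m = 0 then 1 else 0)" for m
    using orth[of m 0] p0 momL_smult[of mu c "p m"] by (simp add: mult.commute)
  have Lm: "momL mu (p m) = 0" if "m \<ge> 1" for m using Lp[of m] c0 that by simp
  have sc: "fls_const s * fls_const c = 1" using Lp[of 0] by (simp add: s_def mult.commute)
  have Pz0: "Pz 0 = fls_const c" by (simp add: Pz_def p0 zser_const)
  have dPz0: "dPz 0 = 0" by (simp add: dPz_def p0 zser_const)
  have E0: "Ez 0 = fls_const c * f"
  proof -
    have "Ez 0 = negp (fls_const c * f)" by (simp add: Ez_def eps_alt p0 zser_const f_def mult.commute)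
    then show ?thesis by (simp add: negp_const_mult negp_stieltjes f_def)
  qed
  have dE0: "dEz 0 = fls_const c * zderiv f"
    using E0 by (simp add: dEz_def Ez_def zderiv_const_mult)
  have dPzE: "dPz m = zderiv (Pz m)" for m by (simp add: dPz_def Pz_def)
  have dEzE: "dEz m = zderiv (Ez m)" for m by (simp add: dEz_def Ez_def)
  have RP: "A (m+1) * Pz (m+1) = u m * Pz m - A m * Pz (m-1)" if "m \<ge> 1" for m
    using arg_cong[OF rec[OF that], of zser]
    by (simp only: zser_smult zser_diff zser_mult zser_lin A_def Pz_def u_def)
  have RE: "A (m+1) * Ez (m+1) = u m * Ez m - A m * Ez (m-1)" if "m \<ge> 1" for m
    using eps_rec[OF rec[OF that], of mu] Lm[OF that] by (simp add: A_def Ez_def u_def eps_alt)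
  have rec0': "Polynomial.smult (rec_a p 1) (p 1) = [:- b 0, 1:] * p 0 - Polynomial.smult 0 0"
    using rec0 by simp
  have RP0: "A 1 * Pz 1 = u 0 * Pz 0 - fls_const 0 * 0"
    using arg_cong[OF rec0', of zser]
    by (simp only: zser_smult zser_diff zser_mult zser_lin A_def Pz_def u_def zser_0)
  have RE0: "A 1 * Ez 1 = u 0 * Ez 0 - fls_const s * 1"
    using eps_rec[OF rec0', of mu] by (simp add: A_def Ez_def u_def eps_alt s_def)
  have dRP: "A (m+1) * dPz (m+1) = Pz m + u m * dPz m - A m * dPz (m-1)" if "m \<ge> 1" for m
    using deriv_rec[OF RP[OF that, unfolded A_def u_def]] by (simp add: A_def u_def dPzE)
  have dRE: "A (m+1) * dEz (m+1) = Ez m + u m * dEz m - A m * dEz (m-1)" if "m \<ge> 1" for m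
    using deriv_rec[OF RE[OF that, unfolded A_def u_def]] by (simp add: A_def u_def dEzE)
  have dRP0: "A 1 * dPz 1 = Pz 0"
    using deriv_rec[OF RP0[unfolded A_def u_def]] by (simp add: A_def u_def dPzE[symmetric] dPz0)
  have dRE0: "A 1 * dEz 1 = Ez 0 + u 0 * dEz 0"
    using deriv_rec[OF RE0[unfolded A_def u_def]] by (simp add: A_def u_def dEzE)
  have Wr: "A m * (Ez (m-1) * Pz m - Ez m * Pz (m-1)) = 1" if "m \<ge> 1" for m
    using that
  proof (induction m rule: nat_induct_at_least)
    case base
    have "A 1 * (Ez (1-1) * Pz 1 - Ez 1 * Pz (1-1)) = Ez 0 * (A 1 * Pz 1) - (A 1 * Ez 1) * Pz 0"
      by (simp add: algebra_simps)
    also have "\<dots> = fls_const s * fls_const c" unfolding RP0 RE0 Pz0 by (simp add: algebra_simps)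
    finally show ?case using sc by simp
  next
    case (Suc m)
    have "A (Suc m) * (Ez (Suc m - 1) * Pz (Suc m) - Ez (Suc m) * Pz (Suc m - 1))
        = Ez m * (A (m+1) * Pz (m+1)) - (A (m+1) * Ez (m+1)) * Pz m"
      by (simp add: algebra_simps)
    also have "\<dots> = A m * (Ez (m-1) * Pz m - Ez m * Pz (m-1))"
      unfolding RP[OF Suc(1)] RE[OF Suc(1)] by (simp add: algebra_simps)
    finally show ?case using Suc by simp
  qed
  have dWr: "A m * (dEz (m-1) * Pz m + Ez (m-1) * dPz m - dEz m * Pz (m-1) - Ez m * dPz (m-1)) = 0"
    if "m \<ge> 1" for m
  proof -
    have "zderiv (A m * (Ez (m-1) * Pz m - Ez m * Pz (m-1))) = 0"
      using Wr[OF that] by simp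
    then show ?thesis
      by (simp add: A_def zderiv_const_mult zderiv_diff zderiv_mult dPzE dEzE algebra_simps)
  qed
  have Th: "Theta mu p W V m = zser W * (Ez m * dPz m - dEz m * Pz m) + 2 * zser V * Ez m * Pz m" for m
    by (simp add: Theta_def Ez_def dPz_def dEz_def Pz_def zderiv_zser)
  have Om: "Omega mu p W V m = A m * zser W * (Ez (m-1) * dPz m - dEz m * Pz (m-1))
      + A m * zser V * (Ez (m-1) * Pz m + Ez m * Pz (m-1))" for m
    by (simp add: Omega_def Ez_def dPz_def dEz_def Pz_def zderiv_zser A_def)
  have I1: "Omega mu p W V (m + 1) = zser [:- b m, 1:] * Theta mu p W V m - Omega mu p W V m"
    if "m \<ge> 1" for m
    using alg1[OF RP[OF that] dRP[OF that] RE[OF that] dRE[OF that] dWr[OF that], of "zser W" "zser V"]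
    unfolding Th Om zser_lin u_def[symmetric] by simp
  have I2: "zser [:- b m, 1:] * (Omega mu p W V (m + 1) - Omega mu p W V m) =
           zser W + fls_const (rec_a p (m + 1) ^ 2) * Theta mu p W V (m + 1)
                  - fls_const (rec_a p m ^ 2) * Theta mu p W V (m - 1)"
    if "m \<ge> 1" for m
    using alg2[OF RP[OF that] dRP[OF that] RE[OF that] dRE[OF that] Wr[OF that] dWr[OF that], of "zser W" "zser V"]
    unfolding Th Om zser_lin u_def[symmetric] fls_const_power A_def[symmetric] by simp
  have I3: "Omega mu p W V m ^ 2 - fls_const (rec_a p m ^ 2) * Theta mu p W V m * Theta mu p W V (m - 1) =
           zser V ^ 2 + zser W * (\<Sum>i<m. Theta mu p W V i)" if "m \<ge> 1" for m
    using that
  proof (induction m rule: nat_induct_at_least)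
    case base
    have hsemi: "zser W * zderiv f = 2 * zser V * f + zser U" using semiclassical f_def by simp
    show ?case
      using alg_base[OF Pz0 dPz0 E0 dE0 RP0[unfolded fls_const_0 mult_zero_right diff_zero] dRP0 RE0[unfolded mult_1_right] dRE0 sc hsemi]
      unfolding Th Om fls_const_power A_def[symmetric] by simp
  next
    case (Suc m)
    have "Omega mu p W V (m+1) ^ 2 - fls_const (rec_a p (m+1) ^ 2) * Theta mu p W V (m+1) * Theta mu p W V m
       = Omega mu p W V m ^ 2 - fls_const (rec_a p m ^ 2) * Theta mu p W V m * Theta mu p W V (m - 1)
         + zser W * Theta mu p W V m"
      by (rule alg3[OF I1[OF Suc(1)] I2[OF Suc(1)]])
    then show ?case using Suc by (simp add: distrib_left)
  qed
  show ?thesis using I1[OF n] I2[OF n] I3[OF n] by blast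
qed

end
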